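(* Let $n\ge 3$ and let $s,t\in S_n$ be such that the commutator $[s,t]=sts^{-1}t^{-1}$ is the $3$-cycle $(z\;y\;x)$ (i.e. $z\mapsto y\mapsto x\mapsto z$), with $x,y,z$ distinct. Then exactly one of the following holds: (a) $x,y,z$ lie in the same cycle of $s$, in this cyclic order, i.e. $d_s(x,y)+d_s(y,z)+d_s(z,x)=d_s(x,x)$; (b) for some cyclic relabeling $(x',y',z')$ of $(x,y,z)$ (one of $(x,y,z)$, $(y,z,x)$, $(z,x,y)$, so that $(z'\;y'\;x')=(z\;y\;x)$), the points $x'$ and $y'$ lie in the same cycle of $s$, the point $z'$ lies in a different cycle of $s$, and $d_s(z',z')=d_s(y',x')$.
   Context: Permutations are composed as functions: $(st)(i)=s(t(i))$. For $s\in S_n$, the $s$-distance $d_s:\{1,\dots,n\}^2\to\mathbb{N}\cup\{\infty\}$ is defined by $d_s(u,v)=\min\{d\ge 1: s^d(u)=v\}$ if $u,v$ lie in the same cycle of $s$, and $d_s(u,v)=\infty$ otherwise. In particular $d_s(u,u)$ is the length of the cycle of $s$ containing $u$. *)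

theory Defs
  imports Main "HOL-Combinatorics.Combinatorics" "HOL-Library.Extended_Nat"
begin

definition sdist :: "(nat \<Rightarrow> nat) \<Rightarrow> nat \<Rightarrow> nat \<Rightarrow> enat" where
  "sdist s u v =
     (if \<exists>d\<ge>1. (s ^^ d) u = v then enat (LEAST d. d \<ge> 1 \<and> (s ^^ d) u = v) else \<infinity>)"

end

theory Submission
  imports Defs
begin


lemma orbit_eq_of_mem:
  "permutation f \<Longrightarrow> v \<in> orbit f u \<Longrightarrow> orbit f v = orbit f u"
  by (metis cyclic_on_orbit' orbit_cyclic_eq3)

lemma card_orbit_dist:
  assumes "permutation f" shows "card (orbit f u) = funpow_dist1 f u u"
proof -
  have "u \<in> orbit f u" using assms by (rule permutation_self_in_orbit)
  then show ?thesis
    using orbit_conv_funpow_dist1[of u f] inj_on_funpow_dist1[of u f u] card_image by fastforce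
qed

lemma sdist_fin:
  assumes "v \<in> orbit f u" shows "sdist f u v = enat (funpow_dist1 f u v)"
proof -
  have ex: "\<exists>d\<ge>1. (f ^^ d) u = v" using assms by (auto simp: orbit_altdef Suc_le_eq)
  have "(LEAST d. d \<ge> 1 \<and> (f ^^ d) u = v) = funpow_dist1 f u v"
  proof (rule Least_equality)
    show "1 \<le> funpow_dist1 f u v \<and> (f ^^ funpow_dist1 f u v) u = v"
      using funpow_dist1_prop[OF assms] by simp
  next
    fix d assume "1 \<le> d \<and> (f ^^ d) u = v"
    then show "funpow_dist1 f u v \<le> d" using funpow_dist1_least[of d f u v] by force
  qed
  then show ?thesis using ex unfolding sdist_def by simp
qed

lemma sdist_inf:
  assumes "v \<notin> orbit f u" shows "sdist f u v = \<infinity>"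
  using assms unfolding sdist_def by (auto simp: orbit_altdef Suc_le_eq)

definition seg :: "('a \<Rightarrow> 'a) \<Rightarrow> 'a set \<Rightarrow> 'a \<Rightarrow> 'a \<Rightarrow> nat \<Rightarrow> bool" where
  "seg f W u v a \<longleftrightarrow> a > 0 \<and> (f ^^ a) u = v \<and> (\<forall>j. 0 < j \<and> j < a \<longrightarrow> (f ^^ j) u \<notin> W)"

lemma seg_dist:
  assumes "seg f W u v a" "v \<in> W"
  shows "v \<in> orbit f u" "funpow_dist1 f u v = a"
proof -
  show vo: "v \<in> orbit f u" unfolding orbit_altdef using assms(1) unfolding seg_def by blast
  have le: "funpow_dist1 f u v \<le> a"
  proof (rule ccontr)
    assume "\<not> funpow_dist1 f u v \<le> a"
    then have "(f ^^ a) u \<noteq> v" using funpow_dist1_least[of a f u v] assms(1) by (simp add: seg_def)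
    then show False using assms(1) by (simp add: seg_def)
  qed
  have "(f ^^ funpow_dist1 f u v) u = v" using funpow_dist1_prop[OF vo] .
  then have "\<not> funpow_dist1 f u v < a" using assms by (auto simp: seg_def)
  then show "funpow_dist1 f u v = a" using le by simp
qed

lemma dist_eqI:
  assumes "(f ^^ L) u = u" "L > 0" "\<And>k. 0 < k \<Longrightarrow> k < L \<Longrightarrow> (f ^^ k) u \<noteq> u"
  shows "funpow_dist1 f u u = L"
proof -
  have "u = (f ^^ L) u \<and> 0 < L" using assms(1,2) by simp
  then have vo: "u \<in> orbit f u" unfolding orbit_altdef by blast
  have le: "funpow_dist1 f u u \<le> L"
  proof (rule ccontr)
    assume "\<not> funpow_dist1 f u u \<le> L"
    then have "(f ^^ L) u \<noteq> u" using funpow_dist1_least[of L f u u] assms(2) by simp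
    then show False using assms(1) by simp
  qed
  have "(f ^^ funpow_dist1 f u u) u = u" using funpow_dist1_prop[OF vo] .
  then have "\<not> funpow_dist1 f u u < L" using assms(3)[of "funpow_dist1 f u u"] by auto
  then show ?thesis using le by simp
qed

lemma orbit_W:
  assumes "(f ^^ L) u = u" "L > 0" "\<And>k. k < L \<Longrightarrow> (f ^^ k) u \<in> W \<Longrightarrow> (f ^^ k) u \<in> P"
    "v \<in> orbit f u" "v \<in> W"
  shows "v \<in> P"
proof -
  obtain m where "m < L" "v = (f ^^ m) u"
    using assms(4) orbit_altdef_bounded[where f=f and n=L and s=u, OF assms(1,2)] by blast
  then show ?thesis using assms(3,5) by blast
qed

lemma seg_mid: "seg f W u v a \<Longrightarrow> 0 < j \<Longrightarrow> j < a \<Longrightarrow> (f ^^ j) u \<notin> W"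
  by (auto simp: seg_def)

lemma seg_add: "seg f W u v a \<Longrightarrow> (f ^^ (m + a)) u = (f ^^ m) v"
  by (auto simp: seg_def funpow_add)

lemma cyc1:
  assumes "seg f W u u a" "u \<in> W"
  shows "funpow_dist1 f u u = a" "\<And>v. v \<in> orbit f u \<Longrightarrow> v \<in> W \<Longrightarrow> v = u"
proof -
  show "funpow_dist1 f u u = a" using seg_dist[OF assms] by simp
  fix v assume "v \<in> orbit f u" "v \<in> W"
  have pts: "(f ^^ k) u \<in> {u}" if "k < a" "(f ^^ k) u \<in> W" for k
    using that seg_mid[OF assms(1), of k] by (cases "k = 0") auto
  have L: "(f ^^ a) u = u" "a > 0" using assms(1) by (auto simp: seg_def)
  show "v = u" using orbit_W[OF L pts] \<open>v \<in> orbit f u\<close> \<open>v \<in> W\<close> by blast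
qed

lemma cyc2:
  assumes "seg f W u v a" "seg f W v u b" "u \<in> W" "v \<in> W" "u \<noteq> v"
  shows "funpow_dist1 f u u = a + b" "\<And>w. w \<in> orbit f u \<Longrightarrow> w \<in> W \<Longrightarrow> w = u \<or> w = v"
    "v \<in> orbit f u"
proof -
  have a: "a > 0" and b: "b > 0" using assms by (auto simp: seg_def)
  have L: "(f ^^ (b + a)) u = u" using seg_add[OF assms(1)] assms(2) by (simp add: seg_def)
  have fa: "(f ^^ a) u = v" using assms(1) by (simp add: seg_def)
  have late: "(f ^^ k) u \<notin> W" if "a < k" "k < b + a" for k
  proof -
    have "(f ^^ k) u = (f ^^ (k - a)) v" using seg_add[OF assms(1), of "k - a"] that by simp
    moreover have "(f ^^ (k - a)) v \<notin> W" using seg_mid[OF assms(2), of "k - a"] that by simp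
    ultimately show ?thesis by simp
  qed
  have pts: "(f ^^ k) u \<in> {u, v}" if "k < b + a" "(f ^^ k) u \<in> W" for k
  proof -
    consider "k = 0" | "0 < k" "k < a" | "k = a" | "a < k" by linarith
    then show ?thesis
    proof cases
      case 1 then show ?thesis by simp
    next
      case 2 then show ?thesis using seg_mid[OF assms(1), of k] that(2) by blast
    next
      case 3 then show ?thesis using fa by simp
    next
      case 4 then show ?thesis using late[of k] that by blast
    qed
  qed
  have "funpow_dist1 f u u = b + a"
  proof (rule dist_eqI[OF L])
    show "0 < b + a" using a by simp
  next
    fix k assume k: "0 < k" "k < b + a"
    consider "k < a" | "k = a" | "a < k" by linarith
    then show "(f ^^ k) u \<noteq> u"
    proof cases
      case 1 then show ?thesis using seg_mid[OF assms(1), of k] k(1) assms(3) by metis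
    next
      case 2 then show ?thesis using fa assms(5) by simp
    next
      case 3 then show ?thesis using late[of k] k(2) assms(3) by metis
    qed
  qed
  then show "funpow_dist1 f u u = a + b" by simp
  fix w assume "w \<in> orbit f u" "w \<in> W"
  then have "w \<in> {u, v}" using orbit_W[OF L _ pts] a by blast
  then show "w = u \<or> w = v" by blast
next
  show "v \<in> orbit f u" using seg_dist[OF assms(1,4)] by simp
qed

lemma cyc3:
  assumes "seg f W u v a" "seg f W v w b" "seg f W w u c" "u \<in> W" "v \<in> W" "w \<in> W"
    "u \<noteq> v" "u \<noteq> w"
  shows "funpow_dist1 f u u = a + b + c" "v \<in> orbit f u" "w \<in> orbit f u"
proof -
  have a: "a > 0" and b: "b > 0" and c: "c > 0" using assms by (auto simp: seg_def)
  have fa: "(f ^^ a) u = v" using assms(1) by (simp add: seg_def)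
  have fab: "(f ^^ (b + a)) u = w"
    using seg_add[OF assms(1), of b] assms(2) by (simp add: seg_def)
  have L: "(f ^^ (c + (b + a))) u = u"
    using fab assms(3) by (simp add: seg_def funpow_add)
  have "funpow_dist1 f u u = c + (b + a)"
  proof (rule dist_eqI[OF L])
    show "0 < c + (b + a)" using a by simp
  next
    fix k assume k: "0 < k" "k < c + (b + a)"
    consider "k < a" | "k = a" | "a < k" "k < b + a" | "k = b + a" | "b + a < k" by linarith
    then show "(f ^^ k) u \<noteq> u"
    proof cases
      case 1 then show ?thesis using seg_mid[OF assms(1), of k] k(1) assms(4) by metis
    next
      case 2 then show ?thesis using fa assms(7) by simp
    next
      case 3
      have "(f ^^ k) u = (f ^^ (k - a)) v" using seg_add[OF assms(1), of "k - a"] 3 by simp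
      moreover have "(f ^^ (k - a)) v \<notin> W" using seg_mid[OF assms(2), of "k - a"] 3 by simp
      ultimately show ?thesis using assms(4) by metis
    next
      case 4 then show ?thesis using fab assms(8) by simp
    next
      case 5
      have kk: "k = (k - (b + a)) + (b + a)" using 5 by simp
      have "(f ^^ k) u = (f ^^ (k - (b + a))) ((f ^^ (b + a)) u)"
        by (subst kk) (simp only: funpow_add comp_apply)
      then have "(f ^^ k) u = (f ^^ (k - (b + a))) w" using fab by simp
      moreover have "(f ^^ (k - (b + a))) w \<notin> W" using seg_mid[OF assms(3), of "k - (b + a)"] 5 k by simp
      ultimately show ?thesis using assms(4) by metis
    qed
  qed
  then show "funpow_dist1 f u u = a + b + c" by simp
  show "v \<in> orbit f u" using seg_dist[OF assms(1,5)] by simp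
  have "w = (f ^^ (b + a)) u \<and> 0 < b + a" using fab a by simp
  then show "w \<in> orbit f u" unfolding orbit_altdef by blast
qed



lemma seg_exists:
  assumes "(f ^^ L) w = w" "L > 0" "w \<in> W"
  shows "\<exists>v a. v \<in> W \<and> seg f W w v a"
proof -
  define P where "P k \<longleftrightarrow> 0 < k \<and> (f ^^ k) w \<in> W" for k
  have PL: "P L" using assms by (simp add: P_def)
  define a where "a = (LEAST k. P k)"
  have Pa: "P a" unfolding a_def using PL by (rule LeastI)
  have mn: "\<not> P j" if "j < a" for j using that unfolding a_def using not_less_Least by blast
  have "seg f W w ((f ^^ a) w) a" unfolding seg_def using Pa mn by (auto simp: P_def)
  then show ?thesis using Pa by (auto simp: P_def)
qed

lemma seg_inj:
  assumes "inj f" "seg f W u m a" "seg f W v m b" "u \<in> W" "v \<in> W"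
  shows "u = v"
proof -
  have key: "u = v" if "inj f" "seg f W u m a" "seg f W v m b" "u \<in> W" "v \<in> W" "a \<le> b"
    for u v a b
  proof -
    have kk: "b = a + (b - a)" using that(6) by simp
    have "(f ^^ a) ((f ^^ (b - a)) v) = (f ^^ b) v"
      by (subst (2) kk) (simp only: funpow_add comp_apply)
    also have "\<dots> = (f ^^ a) u" using that(2,3) by (simp add: seg_def)
    finally have "(f ^^ (b - a)) v = u" using inj_fn[OF that(1), of a] by (simp add: inj_eq)
    moreover have "a > 0" using that(2) by (simp add: seg_def)
    ultimately show "u = v" using seg_mid[OF that(3), of "b - a"] that(4) by (cases "b - a = 0") auto
  qed
  show ?thesis
  proof (cases "a \<le> b")
    case True then show ?thesis using key assms by blast
  next
    case False then show ?thesis using key[of v b u a] assms by auto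
  qed
qed

lemma seg_transfer:
  assumes "seg s W w v a" "\<And>i. i \<notin> W \<Longrightarrow> r i = i"
  shows "seg (r \<circ> s) W w (r v) a"
proof -
  have eq: "((r \<circ> s) ^^ j) w = (s ^^ j) w" if "j < a" for j
    using that
  proof (induction j)
    case 0 then show ?case by simp
  next
    case (Suc j)
    have "(s ^^ Suc j) w \<notin> W" using seg_mid[OF assms(1), of "Suc j"] Suc.prems by simp
    then show ?case using Suc by (simp add: assms(2))
  qed
  have a: "a > 0" using assms(1) by (simp add: seg_def)
  have "((r \<circ> s) ^^ a) w = r (s (((r \<circ> s) ^^ (a - 1)) w))"
    using a by (cases a) auto
  also have "\<dots> = r ((s ^^ a) w)" using eq[of "a - 1"] a by (cases a) auto
  also have "\<dots> = r v" using assms(1) by (simp add: seg_def)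
  finally show ?thesis using assms(1) eq by (auto simp: seg_def)
qed

lemma cyc_eval:
  assumes "distinct [a, b, c]"
  shows "cycle_of_list [a, b, c] a = b" "cycle_of_list [a, b, c] b = c"
    "cycle_of_list [a, b, c] c = a"
  using assms by (auto simp: Transposition.transpose_def)

lemma funpow_conj:
  assumes "bij t"
  shows "((t \<circ> s \<circ> inv t) ^^ k) = t \<circ> (s ^^ k) \<circ> inv t"
proof (induction k)
  case 0 then show ?case by (simp add: fun_eq_iff surj_f_inv_f[OF bij_is_surj[OF assms]])
next
  case (Suc k)
  have "inv t \<circ> t = id" using assms by (simp add: bij_is_inj inv_o_cancel)
  then show ?case using Suc by (simp add: fun_eq_iff)
qed

lemma orbit_conj:
  assumes "bij t"
  shows "orbit (t \<circ> s \<circ> inv t) (t i) = t ` orbit s i"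
proof -
  have "inv t (t i) = i" using assms by (simp add: bij_is_inj)
  then have "((t \<circ> s \<circ> inv t) ^^ k) (t i) = t ((s ^^ k) i)" for k
    using funpow_conj[OF assms, where s=s and k=k] by simp
  then show ?thesis by (auto simp: orbit_altdef)
qed

definition Phi :: "(nat \<Rightarrow> nat) \<Rightarrow> ('a \<Rightarrow> 'a) \<Rightarrow> 'a set \<Rightarrow> nat" where
  "Phi H f S = (\<Sum>X \<in> orbit f ` S. H (card X))"

lemma Phi_conj:
  assumes "t permutes S"
  shows "Phi H (t \<circ> s \<circ> inv t) S = Phi H s S"
proof -
  have bt: "bij t" using assms by (rule permutes_bij)
  have tS: "t ` S = S" using assms by (rule permutes_image)
  have "orbit (t \<circ> s \<circ> inv t) ` S = orbit (t \<circ> s \<circ> inv t) ` (t ` S)" using tS by simp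
  also have "\<dots> = (\<lambda>i. orbit (t \<circ> s \<circ> inv t) (t i)) ` S" by (simp add: image_image)
  also have "\<dots> = (image t) ` (orbit s ` S)" using orbit_conj[OF bt] by (simp add: image_image)
  finally have e: "orbit (t \<circ> s \<circ> inv t) ` S = (image t) ` (orbit s ` S)" .
  have inj: "inj_on (image t) (orbit s ` S)"
    using bij_is_inj[OF bt] by (auto simp: inj_on_def inj_image_eq_iff)
  have "Phi H (t \<circ> s \<circ> inv t) S = (\<Sum>X \<in> orbit s ` S. H (card (t ` X)))"
    unfolding Phi_def e using sum.reindex[OF inj] by (simp add: comp_def)
  also have "\<dots> = Phi H s S"
    unfolding Phi_def using bij_is_inj[OF bt] by (simp add: card_image inj_on_subset)
  finally show ?thesis .
qed



lemma decomp:
  assumes sp: "s permutes S" and fin: "finite S" and WS: "W \<subseteq> S" and rp: "r permutes W"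
    and eqP: "Phi H (r \<circ> s) S = Phi H s S"
  shows "(\<Sum>X \<in> orbit s ` W. H (card X)) = (\<Sum>X \<in> orbit (r \<circ> s) ` W. H (card X))"
proof -
  define p where "p = r \<circ> s"
  have rS: "r permutes S" using rp WS by (rule permutes_subset)
  have pp: "p permutes S" unfolding p_def using sp rS by (rule permutes_compose)
  have perm_s: "permutation s" using sp fin permutation_permutes by blast
  have perm_p: "permutation p" using pp fin permutation_permutes by blast
  have rfix: "r i = i" if "i \<notin> W" for i using rp that by (rule permutes_not_in)
  have self_s: "i \<in> orbit s i" for i using perm_s by (rule permutation_self_in_orbit)
  have self_p: "i \<in> orbit p i" for i using perm_p by (rule permutation_self_in_orbit)
  have F1: "\<exists>w'\<in>W. i \<in> orbit p w'" if iw: "i \<in> orbit s w" and wW: "w \<in> W" for i w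
  proof -
    have all: "\<exists>w'\<in>W. (s ^^ m) w \<in> orbit p w'" for m
    proof (induction m)
      case 0
      have "(s ^^ 0) w \<in> orbit p w" using self_p[of w] by simp
      then show ?case using wW by blast
    next
      case (Suc m)
      then obtain w' where w': "w' \<in> W" "(s ^^ m) w \<in> orbit p w'" by blast
      show ?case
      proof (cases "s ((s ^^ m) w) \<in> W")
        case True
        have "(s ^^ Suc m) w \<in> orbit p (s ((s ^^ m) w))" using self_p[of "s ((s ^^ m) w)"] by simp
        then show ?thesis using True by blast
      next
        case False
        then have "p ((s ^^ m) w) = (s ^^ Suc m) w" by (simp add: p_def rfix)
        moreover have "p ((s ^^ m) w) \<in> orbit p w'" using w'(2) by (rule orbit.step)
        ultimately show ?thesis using w'(1) by metis
      qed
    qed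
    obtain m where "i = (s ^^ m) w" using iw unfolding orbit_altdef_permutation[OF perm_s] by blast
    then show ?thesis using all by blast
  qed
  have O3: "orbit p i = orbit s i" if "\<forall>w\<in>W. i \<notin> orbit s w" for i
  proof (rule orbit_cong[OF self_s])
    fix q assume q: "q \<in> orbit s i"
    have sq: "s q \<in> orbit s i" using q by (rule orbit.step)
    have "s q \<notin> W"
    proof
      assume "s q \<in> W"
      moreover have "orbit s (s q) = orbit s i" using orbit_eq_of_mem[OF perm_s sq] .
      ultimately show False using that self_s by blast
    qed
    then show "p q = s q" by (simp add: p_def rfix)
  qed
  have seteq: "orbit p ` S = (orbit s ` S - orbit s ` W) \<union> orbit p ` W"
  proof (intro set_eqI iffI)
    fix X assume "X \<in> orbit p ` S"
    then obtain i where i: "i \<in> S" "X = orbit p i" by blast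
    show "X \<in> (orbit s ` S - orbit s ` W) \<union> orbit p ` W"
    proof (cases "\<exists>w\<in>W. i \<in> orbit s w")
      case True
      then obtain w' where "w' \<in> W" "i \<in> orbit p w'" using F1 by blast
      then show ?thesis using i orbit_eq_of_mem[OF perm_p] by blast
    next
      case False
      then have "X = orbit s i" using O3 i by simp
      moreover have "orbit s i \<notin> orbit s ` W" using False self_s by auto
      ultimately show ?thesis using i by blast
    qed
  next
    fix X assume X: "X \<in> (orbit s ` S - orbit s ` W) \<union> orbit p ` W"
    show "X \<in> orbit p ` S"
    proof (cases "X \<in> orbit p ` W")
      case True then show ?thesis using WS by blast
    next
      case False
      then obtain i where i: "i \<in> S" "X = orbit s i" "orbit s i \<notin> orbit s ` W" using X by blast
      have "\<forall>w\<in>W. i \<notin> orbit s w"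
        using i(3) orbit_eq_of_mem[OF perm_s] by blast
      then show ?thesis using O3 i by auto
    qed
  qed
  have disj: "(orbit s ` S - orbit s ` W) \<inter> orbit p ` W = {}"
  proof (rule ccontr)
    assume "\<not> ?thesis"
    then obtain i w where i: "i \<in> S" "orbit s i \<notin> orbit s ` W" "w \<in> W" "orbit s i = orbit p w"
      by blast
    then have "w \<in> orbit s i" using self_p by simp
    then have "orbit s w = orbit s i" using orbit_eq_of_mem[OF perm_s] by blast
    then show False using i by auto
  qed
  have finO: "finite (orbit s ` S)" "finite (orbit p ` W)" using fin WS finite_subset by auto
  have "Phi H p S = (\<Sum>X \<in> orbit s ` S - orbit s ` W. H (card X)) + (\<Sum>X \<in> orbit p ` W. H (card X))"
    unfolding Phi_def seteq using finO disj by (simp add: sum.union_disjoint)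
  moreover have "Phi H s S = (\<Sum>X \<in> orbit s ` S - orbit s ` W. H (card X)) + (\<Sum>X \<in> orbit s ` W. H (card X))"
    unfolding Phi_def using finO WS by (simp add: sum.subset_diff image_mono)
  ultimately show ?thesis using eqP unfolding p_def by simp
qed



lemma sq_cancel:
  fixes a b c :: nat
  assumes "(a + b) * (a + b) + c * c = (a + c) * (a + c) + b * b" "a > 0"
  shows "b = c"
proof -
  have "a * b + a * b = a * c + a * c" using assms(1) by (simp add: algebra_simps)
  then have "a * b = a * c" by linarith
  then show ?thesis using assms(2) by simp
qed

lemma pair_facts:
  assumes pf: "permutation f" and s1: "seg f W u v a" and s2: "seg f W v u b" and s3: "seg f W w w c"
    and W: "W = {u, v, w}" and d: "distinct [u, v, w]"
  shows "v \<in> orbit f u" "u \<in> orbit f v" "w \<notin> orbit f u" "w \<notin> orbit f v"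
    "u \<notin> orbit f w" "v \<notin> orbit f w"
    "funpow_dist1 f u v = a" "funpow_dist1 f v u = b" "funpow_dist1 f w w = c"
    "funpow_dist1 f u u = a + b"
    "(\<Sum>X\<in>orbit f ` W. H (card X)) = H (a + b) + H c"
proof -
  have uW: "u \<in> W" and vW: "v \<in> W" and wW: "w \<in> W" using W by auto
  have uv: "u \<noteq> v" using d by simp
  note c2 = cyc2[OF s1 s2 uW vW uv] cyc2[OF s2 s1 vW uW uv[symmetric]]
  note c1 = cyc1[OF s3 wW]
  show vu: "v \<in> orbit f u" using c2 d by simp
  show uv: "u \<in> orbit f v" using c2 d by simp
  show wu: "w \<notin> orbit f u" using c2(2)[of w] d wW by auto
  show wv: "w \<notin> orbit f v" using c2(5)[of w] d wW by auto
  show uw: "u \<notin> orbit f w" using c1(2)[of u] d uW by auto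
  show "v \<notin> orbit f w" using c1(2)[of v] d vW by auto
  show "funpow_dist1 f u v = a" using seg_dist[OF s1 vW] by simp
  show "funpow_dist1 f v u = b" using seg_dist[OF s2 uW] by simp
  show "funpow_dist1 f w w = c" using c1 by simp
  show duu: "funpow_dist1 f u u = a + b" using c2 d by simp
  have e1: "orbit f v = orbit f u" using orbit_eq_of_mem[OF pf vu] .
  have ne: "orbit f w \<noteq> orbit f u" using wu permutation_self_in_orbit[OF pf, of w] by auto
  have im: "orbit f ` W = {orbit f u, orbit f w}" using W e1 by auto
  show "(\<Sum>X\<in>orbit f ` W. H (card X)) = H (a + b) + H c"
    unfolding im using ne card_orbit_dist[OF pf] duu c1 by simp
qed

lemma one_facts:
  assumes pf: "permutation f" and s1: "seg f W u v a" and s2: "seg f W v w b" and s3: "seg f W w u c"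
    and W: "W = {u, v, w}" and d: "distinct [u, v, w]"
  shows "v \<in> orbit f u" "w \<in> orbit f u" "u \<in> orbit f v" "w \<in> orbit f v"
    "u \<in> orbit f w" "v \<in> orbit f w"
    "funpow_dist1 f u v = a" "funpow_dist1 f v w = b" "funpow_dist1 f w u = c"
    "funpow_dist1 f u u = a + b + c"
    "(\<Sum>X\<in>orbit f ` W. H (card X)) = H (a + b + c)"
proof -
  have uW: "u \<in> W" and vW: "v \<in> W" and wW: "w \<in> W" using W by auto
  have d': "u \<noteq> v" "u \<noteq> w" "v \<noteq> w" using d by auto
  note c3 = cyc3[OF s1 s2 s3 uW vW wW d'(1,2)]
  note c3b = cyc3[OF s2 s3 s1 vW wW uW d'(3) d'(1)[symmetric]]
  note c3c = cyc3[OF s3 s1 s2 wW uW vW d'(2)[symmetric] d'(3)[symmetric]]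
  show "v \<in> orbit f u" "w \<in> orbit f u" "u \<in> orbit f v" "w \<in> orbit f v"
    "u \<in> orbit f w" "v \<in> orbit f w" using c3 c3b c3c by auto
  show "funpow_dist1 f u v = a" using seg_dist[OF s1 vW] by simp
  show "funpow_dist1 f v w = b" using seg_dist[OF s2 wW] by simp
  show "funpow_dist1 f w u = c" using seg_dist[OF s3 uW] by simp
  show duu: "funpow_dist1 f u u = a + b + c" using c3 by simp
  have im: "orbit f ` W = {orbit f u}"
    using W orbit_eq_of_mem[OF pf c3(2)] orbit_eq_of_mem[OF pf c3(3)] by auto
  show "(\<Sum>X\<in>orbit f ` W. H (card X)) = H (a + b + c)"
    unfolding im using card_orbit_dist[OF pf] duu by simp
qed

lemma three_facts:
  assumes pf: "permutation f" and s1: "seg f W u u a" and s2: "seg f W v v b" and s3: "seg f W w w c"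
    and W: "W = {u, v, w}" and d: "distinct [u, v, w]"
  shows "(\<Sum>X\<in>orbit f ` W. H (card X)) = H a + H b + H c"
proof -
  have uW: "u \<in> W" and vW: "v \<in> W" and wW: "w \<in> W" using W by auto
  note c1 = cyc1[OF s1 uW] and c2 = cyc1[OF s2 vW] and c3 = cyc1[OF s3 wW]
  have n1: "v \<notin> orbit f u" "w \<notin> orbit f u" "w \<notin> orbit f v"
    using c1(2)[of v] c1(2)[of w] c2(2)[of w] vW wW d by auto
  have self: "q \<in> orbit f q" for q using pf by (rule permutation_self_in_orbit)
  have ne: "orbit f v \<noteq> orbit f u" "orbit f w \<noteq> orbit f u" "orbit f w \<noteq> orbit f v"
    using n1 self by metis+
  have im: "orbit f ` W = {orbit f u, orbit f v, orbit f w}" using W by auto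
  show ?thesis
    unfolding im using ne card_orbit_dist[OF pf] c1(1) c2(1) c3(1) by (simp add: add.assoc)
qed



theorem lemma1:
  fixes n :: nat and s t :: "nat \<Rightarrow> nat" and x y z :: nat
  assumes "n \<ge> 3"
    and "s permutes {1..n}" and "t permutes {1..n}"
    and "x \<in> {1..n}" and "y \<in> {1..n}" and "z \<in> {1..n}"
    and "distinct [x, y, z]"
    and "s \<circ> t \<circ> inv s \<circ> inv t = cycle_of_list [z, y, x]"
  shows "(sdist s x y + sdist s y z + sdist s z x = sdist s x x)
         \<noteq> (\<exists>(x', y', z') \<in> {(x, y, z), (y, z, x), (z, x, y)}.
               sdist s x' y' \<noteq> \<infinity> \<and> sdist s x' z' = \<infinity> \<and>
               sdist s z' z' = sdist s y' x')"
proof -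
  define S where "S = {1..n}"
  define W where "W = {x, y, z}"
  define r where "r = cycle_of_list [x, y, z]"
  define c where "c = cycle_of_list [z, y, x]"
  define p where "p = r \<circ> s"
  have sp: "s permutes S" and tp: "t permutes S" using assms(2,3) by (simp_all add: S_def)
  have fin: "finite S" by (simp add: S_def)
  have WS: "W \<subseteq> S" using assms(4-6) by (simp add: S_def W_def)
  have dxyz: "x \<noteq> y" "x \<noteq> z" "y \<noteq> z" using assms(7) by auto
  have rp: "r permutes W" unfolding r_def W_def using cycle_permutes[of "[x, y, z]"] by simp
  have rx: "r x = y" and ry: "r y = z" and rz: "r z = x"
    unfolding r_def using cyc_eval[OF assms(7)] by auto
  have rfix: "r i = i" if "i \<notin> W" for i using rp that by (rule permutes_not_in)
  have d2: "distinct [z, y, x]" using assms(7) by auto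
  have cz: "c z = y" and cy: "c y = x" and cx: "c x = z"
    unfolding c_def using cyc_eval[OF d2] by auto
  have cfix: "c i = i" if "i \<notin> W" for i
    unfolding c_def using id_outside_supp[of i "[z, y, x]"] that by (simp add: W_def)
  have rc: "r (c i) = i" for i
  proof (cases "i \<in> W")
    case True then show ?thesis using rx ry rz cx cy cz by (auto simp: W_def)
  next
    case False then show ?thesis using rfix cfix by simp
  qed
  have bs: "bij s" and bt: "bij t" using sp tp by (simp_all add: permutes_bij)
  have cdef: "c i = s (t (inv s (inv t i)))" for i
    using assms(8) unfolding c_def[symmetric] by (metis comp_apply)
  have conj_eq: "c (t (s (inv t i))) = s i" for i
  proof -
    have "c (t (s (inv t i))) = s (t (inv s (inv t (t (s (inv t i))))))" by (rule cdef)
    also have "\<dots> = s (t (inv t i))" using bij_is_inj[OF bt] bij_is_inj[OF bs] by simp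
    also have "\<dots> = s i" using bij_is_surj[OF bt] by (simp add: surj_f_inv_f)
    finally show ?thesis .
  qed
  have conj: "t \<circ> s \<circ> inv t = p"
  proof
    fix i
    have "t (s (inv t i)) = r (c (t (s (inv t i))))" by (rule rc[symmetric])
    also have "\<dots> = r (s i)" by (simp only: conj_eq)
    finally show "(t \<circ> s \<circ> inv t) i = p i" by (simp add: p_def)
  qed
  have PhiEq: "Phi H p S = Phi H s S" for H
    using Phi_conj[OF tp, of H s] conj by simp
  have sums: "(\<Sum>X \<in> orbit s ` W. H (card X)) = (\<Sum>X \<in> orbit p ` W. H (card X))" for H :: "nat \<Rightarrow> nat"
  proof -
    have "Phi H (r \<circ> s) S = Phi H s S" using PhiEq[of H] by (simp add: p_def)
    from decomp[OF sp fin WS rp this] show ?thesis by (simp add: p_def)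
  qed
  have perm_s: "permutation s" using sp fin permutation_permutes by blast
  have pp: "p permutes S" unfolding p_def using sp permutes_subset[OF rp WS] by (rule permutes_compose)
  have perm_p: "permutation p" using pp fin permutation_permutes by blast
  have ex: "\<exists>v a. v \<in> W \<and> seg s W w v a" if "w \<in> W" for w
  proof -
    obtain L where L: "L > 0" "(s ^^ L) w = w" by (rule permutation_self[OF perm_s])
    show ?thesis by (rule seg_exists[OF L(2) L(1) that])
  qed
  have xW: "x \<in> W" and yW: "y \<in> W" and zW: "z \<in> W" by (simp_all add: W_def)
  obtain nx hx where nx: "nx \<in> W" "seg s W x nx hx" using ex[OF xW] by blast
  obtain ny hy where ny: "ny \<in> W" "seg s W y ny hy" using ex[OF yW] by blast
  obtain nz hz where nz: "nz \<in> W" "seg s W z nz hz" using ex[OF zW] by blast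
  have injs: "inj s" using bs by (rule bij_is_inj)
  have nxy: "nx \<noteq> ny"
  proof
    assume e: "nx = ny"
    have "seg s W y nx hy" using ny(2) e by simp
    then have "x = y" by (rule seg_inj[OF injs nx(2) _ xW yW])
    then show False using dxyz by simp
  qed
  have nxz: "nx \<noteq> nz"
  proof
    assume e: "nx = nz"
    have "seg s W z nx hz" using nz(2) e by simp
    then have "x = z" by (rule seg_inj[OF injs nx(2) _ xW zW])
    then show False using dxyz by simp
  qed
  have nyz: "ny \<noteq> nz"
  proof
    assume e: "ny = nz"
    have "seg s W z ny hz" using nz(2) e by simp
    then have "y = z" by (rule seg_inj[OF injs ny(2) _ yW zW])
    then show False using dxyz by simp
  qed
  have px: "seg p W x (r nx) hx" unfolding p_def using seg_transfer[OF nx(2) rfix] .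
  have py: "seg p W y (r ny) hy" unfolding p_def using seg_transfer[OF ny(2) rfix] .
  have pz: "seg p W z (r nz) hz" unfolding p_def using seg_transfer[OF nz(2) rfix] .
  have hpos: "hx > 0" "hy > 0" "hz > 0" using nx ny nz by (auto simp: seg_def)
  have Wxyz: "W = {x, y, z}" "W = {y, z, x}" "W = {z, x, y}" "W = {x, z, y}" "W = {y, x, z}"
    "W = {z, y, x}" by (auto simp: W_def)
  have dl: "distinct [x, y, z]" "distinct [y, z, x]" "distinct [z, x, y]" "distinct [x, z, y]"
    "distinct [y, x, z]" "distinct [z, y, x]" using assms(7) by auto
  consider "nx = x" "ny = y" "nz = z" | "nx = y" "ny = x" "nz = z" | "nx = x" "ny = z" "nz = y"
    | "nx = z" "ny = y" "nz = x" | "nx = y" "ny = z" "nz = x" | "nx = z" "ny = x" "nz = y"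
  proof -
    have "nx = x \<or> nx = y \<or> nx = z" "ny = x \<or> ny = y \<or> ny = z" "nz = x \<or> nz = y \<or> nz = z"
      using nx(1) ny(1) nz(1) unfolding W_def by auto
    then show ?thesis using that nxy nxz nyz by (elim disjE) simp_all
  qed
  then show ?thesis
  proof cases
    case 1
    note A = three_facts[OF perm_s nx(2)[unfolded 1] ny(2)[unfolded 1] nz(2)[unfolded 1] Wxyz(1) dl(1),
      of "\<lambda>_. 1::nat"]
    note B = one_facts(11)[OF perm_p px[unfolded 1 rx] py[unfolded 1 ry] pz[unfolded 1 rz] Wxyz(1) dl(1),
      of "\<lambda>_. 1::nat"]
    have False using sums[of "\<lambda>_. 1::nat"] A B by linarith
    then show ?thesis ..
  next
    case 2
    note F = pair_facts[OF perm_s nx(2)[unfolded 2] ny(2)[unfolded 2] nz(2)[unfolded 2] Wxyz(1) dl(1)]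
    note G = pair_facts[OF perm_p px[unfolded 2 ry] pz[unfolded 2 rz] py[unfolded 2 rx] Wxyz(4) dl(4)]
    have e0: "(hx + hy) * (hx + hy) + hz * hz = (hx + hz) * (hx + hz) + hy * hy"
      using sums[of "\<lambda>k. k * k"] F(11)[of "\<lambda>k. k * k"] G(11)[of "\<lambda>k. k * k"] by linarith
    have hyz: "hy = hz" using sq_cancel[OF e0 hpos(1)] .
    have sd: "sdist s x y = enat hx" "sdist s y z = \<infinity>" "sdist s z x = \<infinity>"
      "sdist s x x = enat (hx + hy)" "sdist s x z = \<infinity>" "sdist s z z = enat hz"
      "sdist s y x = enat hy"
      using sdist_fin[OF F(1)] F(7) sdist_inf[OF F(4)] sdist_inf[OF F(5)] sdist_inf[OF F(3)]
        sdist_fin[OF permutation_self_in_orbit[OF perm_s, of x]] F(10)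
        sdist_fin[OF permutation_self_in_orbit[OF perm_s, of z]] F(9)
        sdist_fin[OF F(2)] F(8) by simp_all
    show ?thesis using sd hyz by simp
  next
    case 3
    note F = pair_facts[OF perm_s ny(2)[unfolded 3] nz(2)[unfolded 3] nx(2)[unfolded 3] Wxyz(2) dl(2)]
    note G = pair_facts[OF perm_p px[unfolded 3 rx] py[unfolded 3 rz] pz[unfolded 3 ry] Wxyz(1) dl(1)]
    have e1: "(hy + hz) * (hy + hz) + hx * hx = (hx + hy) * (hx + hy) + hz * hz"
      using sums[of "\<lambda>k. k * k"] F(11)[of "\<lambda>k. k * k"] G(11)[of "\<lambda>k. k * k"] by linarith
    have e0: "(hy + hz) * (hy + hz) + hx * hx = (hy + hx) * (hy + hx) + hz * hz"
      using e1 by (metis add.commute)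
    have hzx: "hz = hx" using sq_cancel[OF e0 hpos(2)] .
    have sd: "sdist s x y = \<infinity>" "sdist s z x = \<infinity>" "sdist s y x = \<infinity>"
      "sdist s y z = enat hy" "sdist s z y = enat hz" "sdist s x x = enat hx"
      using sdist_inf[OF F(5)] sdist_inf[OF F(4)] sdist_inf[OF F(3)]
        sdist_fin[OF F(1)] F(7) sdist_fin[OF F(2)] F(8)
        sdist_fin[OF permutation_self_in_orbit[OF perm_s, of x]] F(9) by simp_all
    show ?thesis using sd hzx by simp
  next
    case 4
    note F = pair_facts[OF perm_s nx(2)[unfolded 4] nz(2)[unfolded 4] ny(2)[unfolded 4] Wxyz(4) dl(4)]
    note G = pair_facts[OF perm_p py[unfolded 4 ry] pz[unfolded 4 rx] px[unfolded 4 rz] Wxyz(2) dl(2)]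
    have e1: "(hx + hz) * (hx + hz) + hy * hy = (hy + hz) * (hy + hz) + hx * hx"
      using sums[of "\<lambda>k. k * k"] F(11)[of "\<lambda>k. k * k"] G(11)[of "\<lambda>k. k * k"] by linarith
    have e0: "(hz + hx) * (hz + hx) + hy * hy = (hz + hy) * (hz + hy) + hx * hx"
      using e1 by (metis add.commute)
    have hxy: "hx = hy" using sq_cancel[OF e0 hpos(3)] .
    have sd: "sdist s x y = \<infinity>" "sdist s z y = \<infinity>" "sdist s y z = \<infinity>"
      "sdist s z x = enat hz" "sdist s x z = enat hx" "sdist s y y = enat hy"
      "sdist s x x = enat (hx + hz)"
      using sdist_inf[OF F(3)] sdist_inf[OF F(4)] sdist_inf[OF F(6)]
        sdist_fin[OF F(2)] F(8) sdist_fin[OF F(1)] F(7)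
        sdist_fin[OF permutation_self_in_orbit[OF perm_s, of y]] F(9)
        sdist_fin[OF permutation_self_in_orbit[OF perm_s, of x]] F(10) by simp_all
    show ?thesis using sd hxy by simp
  next
    case 5
    note F = one_facts[OF perm_s nx(2)[unfolded 5] ny(2)[unfolded 5] nz(2)[unfolded 5] Wxyz(1) dl(1)]
    have sd: "sdist s x y = enat hx" "sdist s y z = enat hy" "sdist s z x = enat hz"
      "sdist s x x = enat (hx + hy + hz)" "sdist s x z \<noteq> \<infinity>" "sdist s y x \<noteq> \<infinity>"
      "sdist s z y \<noteq> \<infinity>"
      using sdist_fin[OF F(1)] F(7) sdist_fin[OF F(4)] F(8) sdist_fin[OF F(5)] F(9)
        sdist_fin[OF permutation_self_in_orbit[OF perm_s, of x]] F(10)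
        sdist_fin[OF F(2)] sdist_fin[OF F(3)] sdist_fin[OF F(6)] by simp_all
    show ?thesis using sd by simp
  next
    case 6
    note A = one_facts(11)[OF perm_s nx(2)[unfolded 6] nz(2)[unfolded 6] ny(2)[unfolded 6] Wxyz(4) dl(4),
      of "\<lambda>_. 1::nat"]
    note B = three_facts[OF perm_p px[unfolded 6 rz] py[unfolded 6 rx] pz[unfolded 6 ry] Wxyz(1) dl(1),
      of "\<lambda>_. 1::nat"]
    have False using sums[of "\<lambda>_. 1::nat"] A B by linarith
    then show ?thesis ..
  qed
qed

end
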